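(* Let H1 $=i(x,i(y,x))$, H2 $=i(i(x,i(y,z)),i(i(x,y),i(x,z)))$, H3 $=i(i(x,n(x)),n(x))$, H4 $=i(x,i(n(x),y))$. The formulas provable from H1–H4 using condensed detachment as the sole rule of inference are exactly those provable from H1–H4 using modus ponens and substitution. Moreover, if $b$ has a proof by modus ponens from substitution instances of H1–H4 in which no line contains a double negation, then $b$ has a double-negation-free condensed-detachment proof from H1–H4.
   Context: Formulas are terms built from propositional variables using the binary connective $i$ (implication) and the unary connective $n$ (negation). Modus ponens: from $i(p,q)$ and $p$ infer $q$; substitution: from $p$ infer $p\sigma$. Condensed detachment: from a major premiss $i(A,B)$ and a minor premiss $C$, after renaming variables so that the two premisses share no variables, if $A$ and $C$ are unifiable with most general unifier $\sigma$, infer $B\sigma$; alphabetic variants of axioms count as axioms and conclusions may be renamed. A formula contains a double negation if it has a (not necessarily proper) subformula of the form $n(n(t))$; a condensed-detachment proof is double-negation free if none of its deduced (non-axiom) steps contains a double negation. *)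

theory Defs
  imports Main
begin

datatype form = V nat | I form form | N form

primrec subst :: "(nat \<Rightarrow> form) \<Rightarrow> form \<Rightarrow> form" where
  "subst s (V x) = s x"
| "subst s (I a b) = I (subst s a) (subst s b)"
| "subst s (N a) = N (subst s a)"

primrec vars :: "form \<Rightarrow> nat set" where
  "vars (V x) = {x}"
| "vars (I a b) = vars a \<union> vars b"
| "vars (N a) = vars a"

definition variant :: "form \<Rightarrow> form \<Rightarrow> bool" where
  "variant f g \<longleftrightarrow> (\<exists>\<rho>. bij \<rho> \<and> g = subst (V \<circ> \<rho>) f)"

definition is_mgu :: "(nat \<Rightarrow> form) \<Rightarrow> form \<Rightarrow> form \<Rightarrow> bool" where
  "is_mgu \<sigma> s t \<longleftrightarrow> subst \<sigma> s = subst \<sigma> t \<and>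
     (\<forall>\<tau>. subst \<tau> s = subst \<tau> t \<longrightarrow> (\<exists>\<rho>. \<forall>x. \<tau> x = subst \<rho> (\<sigma> x)))"

definition cd_step :: "form \<Rightarrow> form \<Rightarrow> form \<Rightarrow> bool" where
  "cd_step M m D \<longleftrightarrow> (\<exists>\<rho>1 \<rho>2 A B \<sigma>. bij \<rho>1 \<and> bij \<rho>2 \<and>
      subst (V \<circ> \<rho>1) M = I A B \<and>
      vars (I A B) \<inter> vars (subst (V \<circ> \<rho>2) m) = {} \<and>
      is_mgu \<sigma> A (subst (V \<circ> \<rho>2) m) \<and>
      variant (subst \<sigma> B) D)"

definition cd_proof :: "form set \<Rightarrow> form list \<Rightarrow> bool" where
  "cd_proof Ax ls \<longleftrightarrow> (\<forall>k < length ls.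
      (\<exists>a\<in>Ax. variant a (ls ! k)) \<or>
      (\<exists>M m. M \<in> set (take k ls) \<and> m \<in> set (take k ls) \<and> cd_step M m (ls ! k)))"

definition cd_provable :: "form set \<Rightarrow> form \<Rightarrow> bool" where
  "cd_provable Ax b \<longleftrightarrow> (\<exists>ls. cd_proof Ax ls \<and> ls \<noteq> [] \<and> last ls = b)"

inductive mp_sub_provable :: "form set \<Rightarrow> form \<Rightarrow> bool" for Ax where
  ax: "a \<in> Ax \<Longrightarrow> mp_sub_provable Ax a"
| sub: "mp_sub_provable Ax p \<Longrightarrow> mp_sub_provable Ax (subst s p)"
| mp: "mp_sub_provable Ax (I p q) \<Longrightarrow> mp_sub_provable Ax p \<Longrightarrow> mp_sub_provable Ax q"

definition mp_inst_proof :: "form set \<Rightarrow> form list \<Rightarrow> bool" where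
  "mp_inst_proof Ax ls \<longleftrightarrow> (\<forall>k < length ls.
      (\<exists>a\<in>Ax. \<exists>s. ls ! k = subst s a) \<or>
      (\<exists>p. I p (ls ! k) \<in> set (take k ls) \<and> p \<in> set (take k ls)))"

primrec has_dn :: "form \<Rightarrow> bool" where
  "has_dn (V x) = False"
| "has_dn (I a b) = (has_dn a \<or> has_dn b)"
| "has_dn (N a) = ((\<exists>t. a = N t) \<or> has_dn a)"

definition dn_free_cd_proof :: "form set \<Rightarrow> form list \<Rightarrow> bool" where
  "dn_free_cd_proof Ax ls \<longleftrightarrow> cd_proof Ax ls \<and>
     (\<forall>k < length ls. (\<exists>a\<in>Ax. variant a (ls ! k)) \<or> \<not> has_dn (ls ! k))"

definition H1 :: form where "H1 = I (V 0) (I (V 1) (V 0))"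
definition H2 :: form where
  "H2 = I (I (V 0) (I (V 1) (V 2))) (I (I (V 0) (V 1)) (I (V 0) (V 2)))"
definition H3 :: form where "H3 = I (I (V 0) (N (V 0))) (N (V 0))"
definition H4 :: form where "H4 = I (V 0) (I (N (V 0)) (V 1))"

definition Hax :: "form set" where "Hax = {H1, H2, H3, H4}"

end

theory Submission
  imports Defs
begin

lemma subst_V[simp]: "subst V f = f" by (induct f) auto
lemma subst_comp: "subst s (subst t f) = subst (\<lambda>x. subst s (t x)) f" by (induct f) auto
lemma subst_cong: "(\<And>x. x \<in> vars f \<Longrightarrow> s x = t x) \<Longrightarrow> subst s f = subst t f" by (induct f) auto
lemma subst_eq_vars: "subst s f = subst t f \<Longrightarrow> x \<in> vars f \<Longrightarrow> s x = t x" by (induct f) auto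
lemma finite_vars[simp]: "finite (vars f)" by (induct f) auto
lemma vars_subst: "vars (subst s f) = (\<Union>x\<in>vars f. vars (s x))" by (induct f) auto
lemma subst_id_on: "(\<And>x. x \<in> vars f \<Longrightarrow> s x = V x) \<Longrightarrow> subst s f = f"
  using subst_cong[of f s V] by simp

lemma has_dn_ren[simp]: "has_dn (subst (\<lambda>x. V (p x)) f) = has_dn f"
proof (induct f)
  case (N a) then show ?case by (cases a) auto
qed auto

fun unify :: "nat \<Rightarrow> (form \<times> form) list \<Rightarrow> (nat \<Rightarrow> form) option" where
  "unify 0 _ = None"
| "unify (Suc n) [] = Some V"
| "unify (Suc n) ((V x, t) # r) = (if t = V x then unify n r else if x \<in> vars t then None else
     (case unify n (map (\<lambda>(a,b). (subst (V(x:=t)) a, subst (V(x:=t)) b)) r) of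
        None \<Rightarrow> None | Some \<sigma> \<Rightarrow> Some (\<lambda>y. subst \<sigma> ((V(x:=t)) y))))"
| "unify (Suc n) ((I a b, V x) # r) = unify n ((V x, I a b) # r)"
| "unify (Suc n) ((N a, V x) # r) = unify n ((V x, N a) # r)"
| "unify (Suc n) ((I a b, I c e) # r) = unify n ((a,c) # (b,e) # r)"
| "unify (Suc n) ((N a, N c) # r) = unify n ((a,c) # r)"
| "unify (Suc n) ((I a b, N c) # r) = None"
| "unify (Suc n) ((N a, I c e) # r) = None"

definition unifs :: "(nat \<Rightarrow> form) \<Rightarrow> (form \<times> form) list \<Rightarrow> bool" where
  "unifs \<tau> eqs \<longleftrightarrow> (\<forall>(a,b)\<in>set eqs. subst \<tau> a = subst \<tau> b)"

lemma unify_sound: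
  "unify n eqs = Some \<sigma> \<Longrightarrow> unifs \<sigma> eqs \<and> (\<forall>\<tau>. unifs \<tau> eqs \<longrightarrow> (\<forall>x. \<tau> x = subst \<tau> (\<sigma> x)))"
proof (induct n eqs arbitrary: \<sigma> rule: unify.induct)
  case (3 n x t r)
  show ?case
  proof (cases "t = V x")
    case True then show ?thesis using 3 by (auto simp: unifs_def)
  next
    case False
    define th where "th = V(x:=t)"
    have xt: "x \<notin> vars t" using 3(3) False by (auto split: if_splits)
    obtain \<sigma>' where u: "unify n (map (\<lambda>(a,b). (subst th a, subst th b)) r) = Some \<sigma>'"
      and sg: "\<sigma> = (\<lambda>y. subst \<sigma>' (th y))"
      using 3(3) False xt by (auto simp: th_def split: option.splits)
    have IH: "unifs \<sigma>' (map (\<lambda>(a,b). (subst th a, subst th b)) r) \<and>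
       (\<forall>\<tau>. unifs \<tau> (map (\<lambda>(a,b). (subst th a, subst th b)) r) \<longrightarrow> (\<forall>x. \<tau> x = subst \<tau> (\<sigma>' x)))"
      using 3(2)[OF False xt] u unfolding th_def by blast
    have tht: "subst th t = t" unfolding th_def by (rule subst_id_on) (use xt in auto)
    have A: "unifs \<sigma> ((V x, t) # r)"
    proof -
      have "subst \<sigma> t = subst \<sigma>' (subst th t)" by (simp add: sg subst_comp)
      also have "\<dots> = subst \<sigma>' t" using tht by simp
      finally have "subst \<sigma> (V x) = subst \<sigma> t" by (simp add: sg th_def)
      moreover have "\<forall>(a,b)\<in>set r. subst \<sigma> a = subst \<sigma> b"
        using IH by (auto simp: unifs_def sg subst_comp[symmetric])
      ultimately show ?thesis by (auto simp: unifs_def)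
    qed
    have B: "\<tau> y = subst \<tau> (\<sigma> y)" if "unifs \<tau> ((V x, t) # r)" for \<tau> y
    proof -
      have tx: "\<tau> x = subst \<tau> t" using that by (auto simp: unifs_def)
      have pt: "subst \<tau> (th z) = \<tau> z" for z using tx by (auto simp: th_def)
      have "unifs \<tau> (map (\<lambda>(a,b). (subst th a, subst th b)) r)"
        using that by (auto simp: unifs_def subst_comp pt)
      then have "\<forall>z. \<tau> z = subst \<tau> (\<sigma>' z)" using IH by blast
      then have "subst \<tau> (\<sigma> y) = subst \<tau> (th y)"
        by (simp add: sg subst_comp) (metis subst_cong)
      then show ?thesis using pt by simp
    qed
    show ?thesis using A B by blast
  qed
next
  case (4 n a b x r) then show ?case by (auto simp: unifs_def)
next
  case (5 n a x r) then show ?case by (auto simp: unifs_def)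
next
  case (6 n a b c e r) then show ?case by (auto simp: unifs_def)
next
  case (7 n a c r) then show ?case by (auto simp: unifs_def)
qed (auto simp: unifs_def)

lemma unify_mgu: "unify n [(a,b)] = Some \<sigma> \<Longrightarrow> is_mgu \<sigma> a b"
  using unify_sound[of n "[(a,b)]" \<sigma>] unfolding is_mgu_def unifs_def by auto

lemma unify_n:
  "unify n [] = (if n = 0 then None else Some V)"
  "unify n ((V x, t) # r) = (if n = 0 then None else if t = V x then unify (n - 1) r else if x \<in> vars t then None else
     (case unify (n - 1) (map (\<lambda>(a,b). (subst (V(x:=t)) a, subst (V(x:=t)) b)) r) of
        None \<Rightarrow> None | Some \<sigma> \<Rightarrow> Some (\<lambda>y. subst \<sigma> ((V(x:=t)) y))))"
  "unify n ((I a b, V x) # r) = (if n = 0 then None else unify (n - 1) ((V x, I a b) # r))"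
  "unify n ((N a, V x) # r) = (if n = 0 then None else unify (n - 1) ((V x, N a) # r))"
  "unify n ((I a b, I c e) # r) = (if n = 0 then None else unify (n - 1) ((a,c) # (b,e) # r))"
  "unify n ((N a, N c) # r) = (if n = 0 then None else unify (n - 1) ((a,c) # r))"
  "unify n ((I a b, N c) # r) = None"
  "unify n ((N a, I c e) # r) = None"
  by (cases n; simp)+

lemma "case unify 60 [(I (V 0) (I (V 1) (V 2)), I (V 3) (I (V 4) (V 3)))] of None \<Rightarrow> False | Some s \<Rightarrow> subst s (I (V 0) (V 2)) = I (V 3) (V 3)"
  by (simp del: unify.simps add: unify_n)

definition okp :: "bool \<Rightarrow> form list \<Rightarrow> bool" where
  "okp d ps \<longleftrightarrow> cd_proof Hax ps \<and>
     (d \<longrightarrow> (\<forall>k<length ps. (\<exists>a\<in>Hax. variant a (ps ! k)) \<or> \<not> has_dn (ps ! k)))"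

definition cdp :: "bool \<Rightarrow> form \<Rightarrow> bool" where
  "cdp d f \<longleftrightarrow> (\<exists>ps. okp d ps \<and> ps \<noteq> [] \<and> last ps = f)"

lemma okp_append: assumes "okp d ps" "okp d qs" shows "okp d (ps @ qs)"
proof -
  have "((\<exists>a\<in>Hax. variant a ((ps@qs) ! k)) \<or>
      (\<exists>M m. M \<in> set (take k (ps@qs)) \<and> m \<in> set (take k (ps@qs)) \<and> cd_step M m ((ps@qs) ! k)))
     \<and> (d \<longrightarrow> (\<exists>a\<in>Hax. variant a ((ps@qs) ! k)) \<or> \<not> has_dn ((ps@qs) ! k))"
    if k: "k < length (ps @ qs)" for k
  proof (cases "k < length ps")
    case True
    then show ?thesis using assms unfolding okp_def cd_proof_def
      by (auto simp: nth_append)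
  next
    case False
    define j where "j = k - length ps"
    have j: "j < length qs" "(ps@qs) ! k = qs ! j" "set (take j qs) \<subseteq> set (take k (ps@qs))"
      using k False by (auto simp: j_def nth_append)
    have "(\<exists>a\<in>Hax. variant a (qs ! j)) \<or>
      (\<exists>M m. M \<in> set (take j qs) \<and> m \<in> set (take j qs) \<and> cd_step M m (qs ! j))"
      "d \<longrightarrow> (\<exists>a\<in>Hax. variant a (qs ! j)) \<or> \<not> has_dn (qs ! j)"
      using assms(2) j(1) unfolding okp_def cd_proof_def by auto
    then show ?thesis unfolding j(2) using j(3) by blast
  qed
  then show ?thesis unfolding okp_def cd_proof_def by auto
qed

lemma okp_snoc:
  assumes "okp d ps"
    and "(\<exists>a\<in>Hax. variant a x) \<or> (\<exists>M m. M \<in> set ps \<and> m \<in> set ps \<and> cd_step M m x)"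
    and "d \<longrightarrow> (\<exists>a\<in>Hax. variant a x) \<or> \<not> has_dn x"
  shows "okp d (ps @ [x])"
  using assms unfolding okp_def cd_proof_def
  by (auto simp: nth_append less_Suc_eq)

lemma variant_refl: "variant a a"
  unfolding variant_def by (rule exI[of _ id]) auto

lemma cdp_ax: "a \<in> Hax \<Longrightarrow> cdp d a"
  unfolding cdp_def
  using variant_refl[of a] by (intro exI[of _ "[a]"]) (force simp: okp_def cd_proof_def)

lemma cdp_step:
  assumes "cdp d M" "cdp d m" "cd_step M m D" "d \<longrightarrow> \<not> has_dn D"
  shows "cdp d D"
proof -
  obtain ps qs where p: "okp d ps" "ps \<noteq> []" "last ps = M" and q: "okp d qs" "qs \<noteq> []" "last qs = m"
    using assms unfolding cdp_def by auto
  have "M \<in> set (ps @ qs)" "m \<in> set (ps @ qs)"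
    using last_in_set[OF p(2)] last_in_set[OF q(2)] p(3) q(3) by auto
  then have "okp d ((ps @ qs) @ [D])"
    using okp_append[OF p(1) q(1)] assms(3,4)
    by (intro okp_snoc) blast+
  then show ?thesis unfolding cdp_def by auto
qed

lemma variant_ren: "variant a f \<Longrightarrow> bij r \<Longrightarrow> variant a (subst (V \<circ> r) f)"
  unfolding variant_def
proof (elim exE conjE)
  fix \<rho> assume "bij \<rho>" "f = subst (V \<circ> \<rho>) a" "bij r"
  then show "\<exists>\<rho>. bij \<rho> \<and> subst (V \<circ> r) f = subst (V \<circ> \<rho>) a"
    using bij_comp[of \<rho> r] by (intro exI[of _ "r \<circ> \<rho>"]) (auto simp: subst_comp comp_def)
qed

lemma cd_step_ren: "cd_step M m f \<Longrightarrow> bij r \<Longrightarrow> cd_step M m (subst (V \<circ> r) f)"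
  unfolding cd_step_def using variant_ren by blast

lemma cdp_bij: assumes "cdp d f" "bij r" shows "cdp d (subst (V \<circ> r) f)"
proof -
  obtain ps where p: "okp d ps" "ps \<noteq> []" "last ps = f" using assms unfolding cdp_def by auto
  define k where "k = length ps - 1"
  have k: "k < length ps" "ps ! k = f" using p(2,3) by (auto simp: k_def last_conv_nth)
  have "(\<exists>a\<in>Hax. variant a f) \<or> (\<exists>M m. M \<in> set (take k ps) \<and> m \<in> set (take k ps) \<and> cd_step M m f)"
       "d \<longrightarrow> (\<exists>a\<in>Hax. variant a f) \<or> \<not> has_dn f"
    using p(1) k unfolding okp_def cd_proof_def by auto
  moreover have "set (take k ps) \<subseteq> set ps" by (rule set_take_subset)
  moreover have "has_dn (subst (V \<circ> r) f) = has_dn f"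
    using has_dn_ren[of r f] by (simp add: comp_def)
  ultimately have "okp d (ps @ [subst (V \<circ> r) f])"
    using assms(2) variant_ren cd_step_ren
    by (intro okp_snoc[OF p(1)]) blast+
  then show ?thesis unfolding cdp_def by auto
qed

lemma ext_bij:
  fixes F :: "nat set" and p :: "nat \<Rightarrow> nat"
  assumes "finite F" "inj_on p F"
  shows "\<exists>r. bij r \<and> (\<forall>x\<in>F. r x = p x)"
proof -
  obtain N where N: "\<forall>x\<in>F \<union> p ` F. x < N"
    using assms(1) finite_nat_set_iff_bounded by (meson finite_Un finite_imageI)
  define A where "A = {..<N} - F"
  define B where "B = {..<N} - p ` F"
  have "card A = card B"
    using N assms by (auto simp: A_def B_def card_Diff_subset card_image subset_iff)
  then obtain g where g: "bij_betw g A B"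
    using finite_same_card_bij[of A B] by (auto simp: A_def B_def)
  define r where "r x = (if x \<in> F then p x else if x \<in> A then g x else x)" for x
  have b1: "bij_betw r F (p ` F)"
    using assms(2) by (auto simp: bij_betw_def inj_on_def r_def)
  have b2: "bij_betw r A B"
    using g by (rule bij_betw_cong[THEN iffD1, rotated]) (auto simp: r_def A_def)
  have b3: "bij_betw r {N..} {N..}"
  proof (rule bij_betw_cong[THEN iffD1, of _ id])
    fix a assume a: "a \<in> {N..}"
    have "a \<notin> F" using N a by (metis UnI1 atLeast_iff not_le)
    moreover have "a \<notin> A" using a by (auto simp: A_def)
    ultimately show "id a = r a" by (simp add: r_def)
  qed simp
  have "bij_betw r (F \<union> A \<union> {N..}) (p ` F \<union> B \<union> {N..})"
  proof (intro bij_betw_combine b1 b2 b3)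
    show "p ` F \<inter> B = {}" by (auto simp: B_def)
    show "(p ` F \<union> B) \<inter> {N..} = {}" using N by (auto simp: B_def) (meson UnCI imageI leD)
  qed
  moreover have "F \<union> A \<union> {N..} = UNIV" "p ` F \<union> B \<union> {N..} = UNIV"
    using N by (auto simp: A_def B_def)
  ultimately show ?thesis by (auto simp: r_def)
qed

lemma cdp_inj: assumes "cdp d f" "inj_on p (vars f)" shows "cdp d (subst (\<lambda>x. V (p x)) f)"
proof -
  obtain r where r: "bij r" "\<forall>x\<in>vars f. r x = p x" using ext_bij[OF finite_vars assms(2)] by blast
  have "subst (V \<circ> r) f = subst (\<lambda>x. V (p x)) f" using r(2) by (intro subst_cong) auto
  then show ?thesis using cdp_bij[OF assms(1) r(1)] by simp
qed

definition swp :: "nat \<Rightarrow> nat \<Rightarrow> nat" where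
  "swp Nb x = (if x < Nb then x + Nb else if x < 2*Nb then x - Nb else x)"

lemma swp_swp[simp]: "swp Nb (swp Nb x) = x"
  unfolding swp_def by auto

lemma bij_swp: "bij (swp Nb)"
  by (metis bijI' swp_swp)

lemma subst_swp2: "subst (\<lambda>x. V (swp Nb x)) (subst (\<lambda>x. V (swp Nb x)) f) = f"
  by (simp add: subst_comp)

lemma bound_ex: "finite (S::nat set) \<Longrightarrow> \<exists>Nb. \<forall>x\<in>S. x < Nb"
  using finite_nat_set_iff_bounded by blast

lemma disj_bound: "(\<And>y. y \<in> S \<Longrightarrow> Nb \<le> y) \<Longrightarrow> (\<And>x. x \<in> T \<Longrightarrow> x < (Nb::nat)) \<Longrightarrow> T \<inter> S = {}"
  by (meson disjoint_iff leD)

lemma cd_u: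
  assumes "cdp d (I A B)" "cdp d m" "\<forall>x\<in>vars (I A B). x < k"
    "case unify n [(A, subst (\<lambda>x. V (x + k)) m)] of None \<Rightarrow> False | Some \<sigma> \<Rightarrow> subst \<sigma> B = D"
    "d \<longrightarrow> \<not> has_dn D"
  shows "cdp d D"
proof -
  obtain \<sigma> where u: "unify n [(A, subst (\<lambda>x. V (x + k)) m)] = Some \<sigma>" and D: "subst \<sigma> B = D"
    using assms(4) by (auto split: option.splits)
  have m': "cdp d (subst (\<lambda>x. V (x + k)) m)" by (rule cdp_inj[OF assms(2)]) (auto simp: inj_on_def)
  have "cd_step (I A B) (subst (\<lambda>x. V (x + k)) m) D"
    unfolding cd_step_def
  proof (intro exI conjI)
    show "bij (id::nat\<Rightarrow>nat)" by simp
    show "subst (V \<circ> id) (I A B) = I A B" by simp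
    show "vars (I A B) \<inter> vars (subst (V \<circ> id) (subst (\<lambda>x. V (x + k)) m)) = {}"
      using assms(3) by (auto simp: vars_subst)
    show "is_mgu \<sigma> A (subst (V \<circ> id) (subst (\<lambda>x. V (x + k)) m))"
      using unify_mgu[OF u] by simp
    show "variant (subst \<sigma> B) D" using D variant_refl by simp
  qed simp
  then show ?thesis using cdp_step[OF assms(1) m'] assms(5) by blast
qed

lemma cd_case1:
  assumes M: "cdp d (I A B)" and m: "cdp d (subst \<theta> A)"
    and Nb: "\<forall>x\<in>vars (I A B) \<union> vars (subst \<theta> A). x < Nb"
    and dn: "d \<longrightarrow> \<not> has_dn (subst (\<lambda>x. if x \<in> vars A then \<theta> x else V (x + Nb)) B)"
  shows "cdp d (subst (\<lambda>x. if x \<in> vars A then \<theta> x else V (x + Nb)) B)"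
proof -
  define sw where "sw = swp Nb"
  define m' where "m' = subst (V \<circ> sw) (subst \<theta> A)"
  define \<sigma> where "\<sigma> x = (if x \<in> vars A then subst (V \<circ> sw) (\<theta> x) else V x)" for x
  have vm': "y \<in> vars m' \<Longrightarrow> Nb \<le> y" for y
    using Nb unfolding m'_def sw_def by (auto simp: vars_subst swp_def)
  have mgu: "is_mgu \<sigma> A m'"
    unfolding is_mgu_def
  proof (intro conjI allI impI)
    have "subst \<sigma> A = subst (\<lambda>x. subst (V \<circ> sw) (\<theta> x)) A"
      by (rule subst_cong) (simp add: \<sigma>_def)
    also have "\<dots> = m'" by (simp add: m'_def subst_comp)
    finally have a: "subst \<sigma> A = m'" .
    have "subst \<sigma> m' = m'"
    proof (rule subst_id_on)
      fix x assume "x \<in> vars m'"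
      then have "Nb \<le> x" by (rule vm')
      moreover have "x \<in> vars A \<Longrightarrow> x < Nb" using Nb by simp
      ultimately have "x \<notin> vars A" by linarith
      then show "\<sigma> x = V x" by (simp add: \<sigma>_def)
    qed
    then show "subst \<sigma> A = subst \<sigma> m'" using a by simp
  next
    fix \<tau> assume e: "subst \<tau> A = subst \<tau> m'"
    have "subst \<tau> m' = subst (\<lambda>x. subst \<tau> (subst (V \<circ> sw) (\<theta> x))) A"
      by (simp add: m'_def subst_comp)
    then have "\<forall>x\<in>vars A. \<tau> x = subst \<tau> (\<sigma> x)"
      using e subst_eq_vars by (auto simp: \<sigma>_def)
    then show "\<exists>\<rho>. \<forall>x. \<tau> x = subst \<rho> (\<sigma> x)"
      by (intro exI[of _ \<tau>]) (auto simp: \<sigma>_def)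
  qed
  have res: "subst (V \<circ> sw) (subst \<sigma> B) = subst (\<lambda>x. if x \<in> vars A then \<theta> x else V (x + Nb)) B"
    unfolding subst_comp
  proof (rule subst_cong)
    fix x assume x: "x \<in> vars B"
    show "subst (V \<circ> sw) (\<sigma> x) = (if x \<in> vars A then \<theta> x else V (x + Nb))"
    proof (cases "x \<in> vars A")
      case True then show ?thesis by (simp add: \<sigma>_def subst_comp sw_def)
    next
      case False
      then have "x < Nb" using Nb x by auto
      then show ?thesis using False by (simp add: \<sigma>_def sw_def swp_def)
    qed
  qed
  have "cd_step (I A B) (subst \<theta> A) (subst (\<lambda>x. if x \<in> vars A then \<theta> x else V (x + Nb)) B)"
    unfolding cd_step_def
  proof (intro exI conjI)
    show "bij (id::nat\<Rightarrow>nat)" by simp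
    show "bij sw" by (simp add: sw_def bij_swp)
    show "subst (V \<circ> id) (I A B) = I A B" by simp
    show "vars (I A B) \<inter> vars (subst (V \<circ> sw) (subst \<theta> A)) = {}"
      by (rule disj_bound[of _ Nb]) (use vm' Nb in \<open>auto simp: m'_def\<close>)
    show "is_mgu \<sigma> A (subst (V \<circ> sw) (subst \<theta> A))" using mgu by (simp add: m'_def)
    show "variant (subst \<sigma> B) (subst (\<lambda>x. if x \<in> vars A then \<theta> x else V (x + Nb)) B)"
      unfolding variant_def using res \<open>bij sw\<close> by metis
  qed
  then show ?thesis using cdp_step[OF M m] dn by blast
qed

lemma cd_case2:
  assumes M: "cdp d (I A B)" and m: "cdp d m" and A: "A = subst \<theta> m"
    and dn: "d \<longrightarrow> \<not> has_dn B"
  shows "cdp d B"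
proof -
  obtain Nb where Nb: "\<forall>x\<in>vars (I A B) \<union> vars m. x < Nb" using bound_ex by (meson finite_UnI finite_vars)
  define sw where "sw = swp Nb"
  define m' where "m' = subst (V \<circ> sw) m"
  define \<sigma> where "\<sigma> y = (if y \<in> vars m' then \<theta> (sw y) else V y)" for y
  have vm': "vars m' = sw ` vars m" by (auto simp: m'_def vars_subst)
  have big: "y \<in> vars m' \<Longrightarrow> Nb \<le> y" for y
    using Nb unfolding vm' sw_def by (auto simp: swp_def)
  have mgu: "is_mgu \<sigma> A m'"
    unfolding is_mgu_def
  proof (intro conjI allI impI)
    have a: "subst \<sigma> A = A"
    proof (rule subst_id_on)
      fix x assume "x \<in> vars A"
      then have "x < Nb" using Nb by auto
      then have "x \<notin> vars m'" using big by force
      then show "\<sigma> x = V x" by (simp add: \<sigma>_def)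
    qed
    have "subst \<sigma> m' = subst (\<lambda>x. \<sigma> (sw x)) m" by (simp add: m'_def subst_comp)
    also have "\<dots> = subst \<theta> m" by (rule subst_cong) (auto simp: \<sigma>_def vm' sw_def)
    finally show "subst \<sigma> A = subst \<sigma> m'" using a A by simp
  next
    fix \<tau> assume e: "subst \<tau> A = subst \<tau> m'"
    have "subst \<tau> A = subst (\<lambda>x. subst \<tau> (\<theta> x)) m" by (simp add: A subst_comp)
    moreover have "subst \<tau> m' = subst (\<lambda>x. \<tau> (sw x)) m" by (simp add: m'_def subst_comp)
    ultimately have h: "\<forall>x\<in>vars m. subst \<tau> (\<theta> x) = \<tau> (sw x)" using e subst_eq_vars by metis
    have "\<tau> y = subst \<tau> (\<sigma> y)" for y
    proof (cases "y \<in> vars m'")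
      case True
      then have "sw y \<in> vars m" unfolding vm' sw_def by auto
      then show ?thesis using h True by (auto simp: \<sigma>_def sw_def)
    qed (simp add: \<sigma>_def)
    then show "\<exists>\<rho>. \<forall>x. \<tau> x = subst \<rho> (\<sigma> x)" by blast
  qed
  have res: "subst \<sigma> B = B"
  proof (rule subst_id_on)
    fix x assume "x \<in> vars B"
    then have "x < Nb" using Nb by auto
    then have "x \<notin> vars m'" using big by force
    then show "\<sigma> x = V x" by (simp add: \<sigma>_def)
  qed
  have "cd_step (I A B) m B"
    unfolding cd_step_def
  proof (intro exI conjI)
    show "bij (id::nat\<Rightarrow>nat)" by simp
    show "bij sw" by (simp add: sw_def bij_swp)
    show "subst (V \<circ> id) (I A B) = I A B" by simp
    show "vars (I A B) \<inter> vars (subst (V \<circ> sw) m) = {}"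
      by (rule disj_bound[of _ Nb]) (use big Nb in \<open>auto simp: m'_def\<close>)
    show "is_mgu \<sigma> A (subst (V \<circ> sw) m)" using mgu by (simp add: m'_def)
    show "variant (subst \<sigma> B) B" using res variant_refl by simp
  qed
  then show ?thesis using cdp_step[OF M m] dn by blast
qed

lemma cd_case1g:
  assumes M: "cdp d (I A B)" and m: "cdp d (subst \<theta> A)"
    and fr: "\<forall>x\<in>vars B - vars A. \<exists>y. \<theta> x = V y \<and> y \<notin> vars (subst \<theta> A)"
    and inj: "inj_on \<theta> (vars B - vars A)"
    and dn: "d \<longrightarrow> \<not> has_dn (subst \<theta> B)"
  shows "cdp d (subst \<theta> B)"
proof -
  obtain Nb where Nb: "\<forall>x\<in>vars (I A B) \<union> vars (subst \<theta> A). x < Nb"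
    using bound_ex by (meson finite_UnI finite_vars)
  define \<sigma> where "\<sigma> x = (if x \<in> vars A then \<theta> x else V (x + Nb))" for x
  define R where "R = subst \<sigma> B"
  define \<pi> where "\<pi> y = (if Nb \<le> y then (case \<theta> (y - Nb) of V z \<Rightarrow> z | _ \<Rightarrow> y) else y)" for y
  have small: "x \<in> vars A \<Longrightarrow> u \<in> vars (\<theta> x) \<Longrightarrow> u < Nb" for x u
    using Nb by (auto simp: vars_subst)
  have e1: "subst (\<lambda>y. V (\<pi> y)) R = subst \<theta> B"
    unfolding R_def subst_comp
  proof (rule subst_cong)
    fix x assume x: "x \<in> vars B"
    show "subst (\<lambda>y. V (\<pi> y)) (\<sigma> x) = \<theta> x"
    proof (cases "x \<in> vars A")
      case True
      have "subst (\<lambda>y. V (\<pi> y)) (\<theta> x) = \<theta> x"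
      proof (rule subst_id_on)
        fix u assume "u \<in> vars (\<theta> x)"
        then have "u < Nb" by (rule small[OF True])
        then show "V (\<pi> u) = V u" by (simp add: \<pi>_def)
      qed
      then show ?thesis using True by (simp add: \<sigma>_def)
    next
      case False
      then obtain y where "\<theta> x = V y" using fr x by blast
      then show ?thesis using False by (simp add: \<sigma>_def \<pi>_def)
    qed
  qed
  have cls: "u \<in> vars R \<Longrightarrow> (u < Nb \<and> u \<in> vars (subst \<theta> A)) \<or> (\<exists>x\<in>vars B - vars A. u = x + Nb)" for u
  proof -
    assume "u \<in> vars R"
    then obtain x where x: "x \<in> vars B" "u \<in> vars (\<sigma> x)" unfolding R_def by (auto simp: vars_subst)
    show ?thesis
    proof (cases "x \<in> vars A")
      case True
      then have "u \<in> vars (subst \<theta> A)" using x by (auto simp: \<sigma>_def vars_subst)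
      then show ?thesis using small True x by (auto simp: \<sigma>_def)
    next
      case False
      then show ?thesis using x by (auto simp: \<sigma>_def)
    qed
  qed
  have inj2: "inj_on \<pi> (vars R)"
  proof (rule inj_onI)
    fix u v assume u: "u \<in> vars R" and v: "v \<in> vars R" and e: "\<pi> u = \<pi> v"
    have pb: "x \<in> vars B - vars A \<Longrightarrow> \<theta> x = V (\<pi> (x + Nb)) \<and> \<pi> (x + Nb) \<notin> vars (subst \<theta> A)" for x
    proof -
      assume x: "x \<in> vars B - vars A"
      then obtain y where "\<theta> x = V y" "y \<notin> vars (subst \<theta> A)" using fr by blast
      then show ?thesis by (simp add: \<pi>_def)
    qed
    have pid: "w < Nb \<Longrightarrow> \<pi> w = w" for w by (simp add: \<pi>_def)
    show "u = v"
      using cls[OF u] cls[OF v]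
    proof (elim disjE conjE bexE)
      assume "u < Nb" "v < Nb" then show "u = v" using e pid by simp
    next
      fix x assume "u < Nb" "u \<in> vars (subst \<theta> A)" "x \<in> vars B - vars A" "v = x + Nb"
      then show "u = v" using e pb[of x] pid by auto
    next
      fix x assume "v < Nb" "v \<in> vars (subst \<theta> A)" "x \<in> vars B - vars A" "u = x + Nb"
      then show "u = v" using e pb[of x] pid by auto
    next
      fix x x' assume "x \<in> vars B - vars A" "u = x + Nb" "x' \<in> vars B - vars A" "v = x' + Nb"
      then have "\<theta> x = \<theta> x'" using e pb[of x] pb[of x'] by simp
      then have "x = x'" using inj \<open>x \<in> vars B - vars A\<close> \<open>x' \<in> vars B - vars A\<close> by (meson inj_onD)
      then show "u = v" using \<open>u = x + Nb\<close> \<open>v = x' + Nb\<close> by simp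
    qed
  qed
  have "d \<longrightarrow> \<not> has_dn R" using dn e1 has_dn_ren[of \<pi> R] by simp
  then have "cdp d R" unfolding R_def \<sigma>_def by (rule cd_case1[OF M m Nb])
  from cdp_inj[OF this inj2] show ?thesis using e1 by simp
qed

lemma axH1: "cdp d (I (V 0) (I (V 1) (V 0)))"
  using cdp_ax[of H1 d] by (simp add: Hax_def H1_def)

lemma axH2: "cdp d (I (I (V 0) (I (V 1) (V 2))) (I (I (V 0) (V 1)) (I (V 0) (V 2))))"
  using cdp_ax[of H2 d] by (simp add: Hax_def H2_def)

lemma axH3: "cdp d (I (I (V 0) (N (V 0))) (N (V 0)))"
  using cdp_ax[of H3 d] by (simp add: Hax_def H3_def)

lemma axH4: "cdp d (I (V 0) (I (N (V 0)) (V 1)))"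
  using cdp_ax[of H4 d] by (simp add: Hax_def H4_def)

lemma c0: "cdp d (I (I (V 3) (V 4)) (I (V 3) (V 3)))"
  by (rule cd_u[OF axH2 axH1, where k=3 and n=60]) (simp_all del: unify.simps add: unify_n)

lemma c1: "cdp d (I (V 5) (V 5))"
  by (rule cd_u[OF c0 axH1, where k=5 and n=60]) (simp_all del: unify.simps add: unify_n)

lemma c2: "cdp d (I (V 1) (I (I (V 2) (I (V 3) (V 4))) (I (I (V 2) (V 3)) (I (V 2) (V 4)))))"
  by (rule cd_u[OF axH1 axH2, where k=2 and n=60]) (simp_all del: unify.simps add: unify_n)

lemma c3: "cdp d (I (I (V 4) (I (V 5) (I (V 6) (V 7)))) (I (V 4) (I (I (V 5) (V 6)) (I (V 5) (V 7)))))"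
  by (rule cd_u[OF axH2 c2, where k=3 and n=60]) (simp_all del: unify.simps add: unify_n)

lemma c4: "cdp d (I (V 1) (I (V 2) (I (V 3) (V 2))))"
  by (rule cd_u[OF axH1 axH1, where k=2 and n=60]) (simp_all del: unify.simps add: unify_n)

lemma c5: "cdp d (I (I (V 4) (V 5)) (I (V 4) (I (V 6) (V 5))))"
  by (rule cd_u[OF axH2 c4, where k=3 and n=60]) (simp_all del: unify.simps add: unify_n)

lemma c6: "cdp d (I (I (V 7) (I (V 8) (V 9))) (I (V 6) (I (I (V 7) (V 8)) (I (V 7) (V 9)))))"
  by (rule cd_u[OF c5 axH2, where k=7 and n=60]) (simp_all del: unify.simps add: unify_n)

lemma c7: "cdp d (I (I (V 15) (I (V 16) (V 17))) (I (I (V 14) (I (V 15) (V 16))) (I (V 14) (I (V 15) (V 17)))))"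
  by (rule cd_u[OF c3 c6, where k=8 and n=60]) (simp_all del: unify.simps add: unify_n)

lemma c8: "cdp d (I (I (I (V 18) (I (V 19) (V 20))) (I (V 17) (I (V 18) (V 19)))) (I (I (V 18) (I (V 19) (V 20))) (I (V 17) (I (V 18) (V 20)))))"
  by (rule cd_u[OF axH2 c7, where k=3 and n=60]) (simp_all del: unify.simps add: unify_n)

lemma c9: "cdp d (I (I (V 24) (I (V 23) (V 20))) (I (V 23) (I (V 24) (V 20))))"
  by (rule cd_u[OF c8 c4, where k=21 and n=60]) (simp_all del: unify.simps add: unify_n)

lemma c10: "cdp d (I (I (V 6) (V 7)) (I (I (V 9) (V 6)) (I (V 9) (V 7))))"
  by (rule cd_u[OF c3 axH1, where k=8 and n=60]) (simp_all del: unify.simps add: unify_n)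

lemma c11: "cdp d (I (I (V 13) (V 14)) (I (V 6) (I (I (V 16) (V 13)) (I (V 16) (V 14)))))"
  by (rule cd_u[OF c5 c10, where k=7 and n=60]) (simp_all del: unify.simps add: unify_n)

lemma c12: "cdp d (I (I (V 21) (V 22)) (I (I (V 14) (I (V 24) (V 21))) (I (V 14) (I (V 24) (V 22)))))"
  by (rule cd_u[OF c3 c11, where k=8 and n=60]) (simp_all del: unify.simps add: unify_n)

lemma c13: "cdp d (I (I (I (V 24) (V 25)) (I (V 17) (I (V 27) (V 24)))) (I (I (V 24) (V 25)) (I (V 17) (I (V 27) (V 25)))))"
  by (rule cd_u[OF axH2 c12, where k=3 and n=60]) (simp_all del: unify.simps add: unify_n)

lemma c14: "cdp d (I (V 1) (I (I (I (V 26) (V 27)) (I (V 19) (I (V 29) (V 26)))) (I (I (V 26) (V 27)) (I (V 19) (I (V 29) (V 27))))))"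
  by (rule cd_u[OF axH1 c13, where k=2 and n=60]) (simp_all del: unify.simps add: unify_n)

lemma c15: "cdp d (I (I (V 4) (I (I (V 29) (V 30)) (I (V 22) (I (V 32) (V 29))))) (I (V 4) (I (I (V 29) (V 30)) (I (V 22) (I (V 32) (V 30))))))"
  by (rule cd_u[OF axH2 c14, where k=3 and n=60]) (simp_all del: unify.simps add: unify_n)

lemma c16: "cdp d (I (I (I (V 9) (V 10)) (I (V 12) (V 9))) (I (I (V 9) (V 10)) (I (V 12) (V 10))))"
  by (rule cd_u[OF axH2 c10, where k=3 and n=60]) (simp_all del: unify.simps add: unify_n)

lemma c17: "cdp d (I (V 1) (I (I (I (V 11) (V 12)) (I (V 14) (V 11))) (I (I (V 11) (V 12)) (I (V 14) (V 12)))))"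
  by (rule cd_u[OF axH1 c16, where k=2 and n=60]) (simp_all del: unify.simps add: unify_n)

lemma c18: "cdp d (I (I (V 4) (I (I (V 14) (V 15)) (I (V 17) (V 14)))) (I (V 4) (I (I (V 14) (V 15)) (I (V 17) (V 15)))))"
  by (rule cd_u[OF axH2 c17, where k=3 and n=60]) (simp_all del: unify.simps add: unify_n)

lemma c19: "cdp d (I (I (V 17) (V 14)) (I (I (V 14) (V 15)) (I (V 17) (V 15))))"
  by (rule cd_u[OF c18 axH1, where k=18 and n=60]) (simp_all del: unify.simps add: unify_n)

lemma c20: "cdp d (I (I (V 24) (V 21)) (I (V 6) (I (I (V 21) (V 22)) (I (V 24) (V 22)))))"
  by (rule cd_u[OF c5 c19, where k=7 and n=60]) (simp_all del: unify.simps add: unify_n)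

lemma c21: "cdp d (I (I (V 57) (V 54)) (I (I (V 55) (V 30)) (I (I (V 54) (V 55)) (I (V 57) (V 30)))))"
  by (rule cd_u[OF c15 c20, where k=33 and n=60]) (simp_all del: unify.simps add: unify_n)

lemma c22: "cdp d (I (V 1) (I (I (V 5) (V 6)) (I (V 5) (V 5))))"
  by (rule cd_u[OF axH1 c0, where k=2 and n=60]) (simp_all del: unify.simps add: unify_n)

lemma c23: "cdp d (I (I (V 4) (I (V 8) (V 9))) (I (V 4) (I (V 8) (V 8))))"
  by (rule cd_u[OF axH2 c22, where k=3 and n=60]) (simp_all del: unify.simps add: unify_n)

lemma c24: "cdp d (I (V 1) (I (I (V 6) (I (V 10) (V 11))) (I (V 6) (I (V 10) (V 10)))))"
  by (rule cd_u[OF axH1 c23, where k=2 and n=60]) (simp_all del: unify.simps add: unify_n)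

lemma c25: "cdp d (I (I (V 4) (I (V 9) (I (V 13) (V 14)))) (I (V 4) (I (V 9) (I (V 13) (V 13)))))"
  by (rule cd_u[OF axH2 c24, where k=3 and n=60]) (simp_all del: unify.simps add: unify_n)

lemma c26: "cdp d (I (I (V 21) (V 22)) (I (I (V 24) (V 21)) (I (V 24) (V 24))))"
  by (rule cd_u[OF c25 c10, where k=15 and n=60]) (simp_all del: unify.simps add: unify_n)

lemma c27: "cdp d (I (V 1) (I (I (V 6) (I (V 7) (I (V 8) (V 9)))) (I (V 6) (I (I (V 7) (V 8)) (I (V 7) (V 9))))))"
  by (rule cd_u[OF axH1 c3, where k=2 and n=60]) (simp_all del: unify.simps add: unify_n)

lemma c28: "cdp d (I (I (V 4) (I (V 9) (I (V 10) (I (V 11) (V 12))))) (I (V 4) (I (V 9) (I (I (V 10) (V 11)) (I (V 10) (V 12))))))"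
  by (rule cd_u[OF axH2 c27, where k=3 and n=60]) (simp_all del: unify.simps add: unify_n)

lemma c29: "cdp d (I (V 1) (I (I (V 6) (V 7)) (I (V 6) (I (V 8) (V 7)))))"
  by (rule cd_u[OF axH1 c5, where k=2 and n=60]) (simp_all del: unify.simps add: unify_n)

lemma c30: "cdp d (I (I (V 4) (I (V 9) (V 10))) (I (V 4) (I (V 9) (I (V 11) (V 10)))))"
  by (rule cd_u[OF axH2 c29, where k=3 and n=60]) (simp_all del: unify.simps add: unify_n)

lemma c31: "cdp d (I (I (V 19) (I (V 11) (V 12))) (I (I (V 22) (V 19)) (I (I (V 22) (V 11)) (I (V 22) (V 12)))))"
  by (rule cd_u[OF c28 c10, where k=13 and n=60]) (simp_all del: unify.simps add: unify_n)

lemma c32: "cdp d (I (I (V 31) (I (V 23) (V 24))) (I (I (V 34) (V 31)) (I (V 11) (I (I (V 34) (V 23)) (I (V 34) (V 24))))))"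
  by (rule cd_u[OF c30 c31, where k=12 and n=60]) (simp_all del: unify.simps add: unify_n)

lemma c33: "cdp d (I (I (V 44) (I (V 36) (V 37))) (I (I (V 47) (V 44)) (I (I (V 24) (I (V 47) (V 36))) (I (V 24) (I (V 47) (V 37))))))"
  by (rule cd_u[OF c28 c32, where k=13 and n=60]) (simp_all del: unify.simps add: unify_n)

lemma c34: "cdp d (I (I (V 52) (I (V 44) (V 45))) (I (I (I (V 55) (V 52)) (I (V 32) (I (V 55) (V 44)))) (I (I (V 55) (V 52)) (I (V 32) (I (V 55) (V 45))))))"
  by (rule cd_u[OF c3 c33, where k=8 and n=60]) (simp_all del: unify.simps add: unify_n)

lemma c35: "cdp d (I (I (I (V 55) (I (V 47) (V 48))) (I (I (V 58) (V 55)) (I (V 35) (I (V 58) (V 47))))) (I (I (V 55) (I (V 47) (V 48))) (I (I (V 58) (V 55)) (I (V 35) (I (V 58) (V 48))))))"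
  by (rule cd_u[OF axH2 c34, where k=3 and n=60]) (simp_all del: unify.simps add: unify_n)

lemma c36: "cdp d (I (V 1) (I (V 3) (I (V 4) (I (V 5) (V 4)))))"
  by (rule cd_u[OF axH1 c4, where k=2 and n=60]) (simp_all del: unify.simps add: unify_n)

lemma c37: "cdp d (I (I (V 55) (I (V 63) (V 48))) (I (I (V 64) (V 55)) (I (V 63) (I (V 64) (V 48)))))"
  by (rule cd_u[OF c35 c36, where k=59 and n=60]) (simp_all del: unify.simps add: unify_n)

lemma c38: "cdp d (I (I (V 70) (I (V 78) (V 63))) (I (I (V 79) (V 70)) (I (V 78) (V 78))))"
  by (rule cd_u[OF c25 c37, where k=15 and n=60]) (simp_all del: unify.simps add: unify_n)

lemma c39: "cdp d (I (V 1) (I (I (V 6) (I (I (V 31) (V 32)) (I (V 24) (I (V 34) (V 31))))) (I (V 6) (I (I (V 31) (V 32)) (I (V 24) (I (V 34) (V 32)))))))"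
  by (rule cd_u[OF axH1 c15, where k=2 and n=60]) (simp_all del: unify.simps add: unify_n)

lemma c40: "cdp d (I (I (V 4) (I (V 9) (I (I (V 34) (V 35)) (I (V 27) (I (V 37) (V 34)))))) (I (V 4) (I (V 9) (I (I (V 34) (V 35)) (I (V 27) (I (V 37) (V 35)))))))"
  by (rule cd_u[OF axH2 c39, where k=3 and n=60]) (simp_all del: unify.simps add: unify_n)

lemma c41: "cdp d (I (V 1) (I (I (V 6) (I (I (V 16) (V 17)) (I (V 19) (V 16)))) (I (V 6) (I (I (V 16) (V 17)) (I (V 19) (V 17))))))"
  by (rule cd_u[OF axH1 c18, where k=2 and n=60]) (simp_all del: unify.simps add: unify_n)

lemma c42: "cdp d (I (I (V 4) (I (V 9) (I (I (V 19) (V 20)) (I (V 22) (V 19))))) (I (V 4) (I (V 9) (I (I (V 19) (V 20)) (I (V 22) (V 20))))))"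
  by (rule cd_u[OF axH2 c41, where k=3 and n=60]) (simp_all del: unify.simps add: unify_n)

lemma c43: "cdp d (I (I (V 27) (I (V 22) (V 19))) (I (V 27) (I (I (V 19) (V 20)) (I (V 22) (V 20)))))"
  by (rule cd_u[OF c42 c5, where k=23 and n=60]) (simp_all del: unify.simps add: unify_n)

lemma c44: "cdp d (I (I (V 39) (I (V 34) (V 31))) (I (V 39) (I (V 11) (I (I (V 31) (V 32)) (I (V 34) (V 32))))))"
  by (rule cd_u[OF c30 c43, where k=12 and n=60]) (simp_all del: unify.simps add: unify_n)

lemma c45: "cdp d (I (I (V 77) (I (V 72) (V 69))) (I (V 77) (I (I (V 70) (V 35)) (I (I (V 69) (V 70)) (I (V 72) (V 35))))))"
  by (rule cd_u[OF c40 c44, where k=38 and n=60]) (simp_all del: unify.simps add: unify_n)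

lemma c46: "cdp d (I (V 1) (I (I (V 2) (N (V 2))) (N (V 2))))"
  by (rule cd_u[OF axH1 axH3, where k=2 and n=60]) (simp_all del: unify.simps add: unify_n)

lemma c47: "cdp d (I (I (V 4) (I (V 5) (N (V 5)))) (I (V 4) (N (V 5))))"
  by (rule cd_u[OF axH2 c46, where k=3 and n=60]) (simp_all del: unify.simps add: unify_n)

lemma c48: "cdp d (I (V 1) (I (I (V 6) (I (V 7) (N (V 7)))) (I (V 6) (N (V 7)))))"
  by (rule cd_u[OF axH1 c47, where k=2 and n=60]) (simp_all del: unify.simps add: unify_n)

lemma c49: "cdp d (I (I (V 4) (I (V 9) (I (V 10) (N (V 10))))) (I (V 4) (I (V 9) (N (V 10)))))"
  by (rule cd_u[OF axH2 c48, where k=3 and n=60]) (simp_all del: unify.simps add: unify_n)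

lemma c50: "cdp d (I (V 1) (I (I (V 6) (I (V 11) (I (V 12) (N (V 12))))) (I (V 6) (I (V 11) (N (V 12))))))"
  by (rule cd_u[OF axH1 c49, where k=2 and n=60]) (simp_all del: unify.simps add: unify_n)

lemma c51: "cdp d (I (I (V 4) (I (V 9) (I (V 14) (I (V 15) (N (V 15)))))) (I (V 4) (I (V 9) (I (V 14) (N (V 15))))))"
  by (rule cd_u[OF axH2 c50, where k=3 and n=60]) (simp_all del: unify.simps add: unify_n)

lemma c52: "cdp d (I (V 1) (I (V 2) (I (N (V 2)) (V 3))))"
  by (rule cd_u[OF axH1 axH4, where k=2 and n=60]) (simp_all del: unify.simps add: unify_n)

lemma c53: "cdp d (I (I (V 4) (V 5)) (I (V 4) (I (N (V 5)) (V 6))))"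
  by (rule cd_u[OF axH2 c52, where k=3 and n=60]) (simp_all del: unify.simps add: unify_n)

lemma c54: "cdp d (I (V 1) (I (I (V 6) (V 7)) (I (V 6) (I (N (V 7)) (V 8)))))"
  by (rule cd_u[OF axH1 c53, where k=2 and n=60]) (simp_all del: unify.simps add: unify_n)

lemma c55: "cdp d (I (I (V 4) (I (V 9) (V 10))) (I (V 4) (I (V 9) (I (N (V 10)) (V 11)))))"
  by (rule cd_u[OF axH2 c54, where k=3 and n=60]) (simp_all del: unify.simps add: unify_n)

lemma c56: "cdp d (I (I (V 17) (I (V 22) (V 23))) (I (V 17) (I (I (V 22) (N (V 23))) (I (V 22) (V 24)))))"
  by (rule cd_u[OF c28 c55, where k=13 and n=60]) (simp_all del: unify.simps add: unify_n)

lemma c57: "cdp d (I (I (V 29) (I (V 34) (V 35))) (I (V 29) (I (V 11) (I (I (V 34) (N (V 35))) (I (V 34) (V 36))))))"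
  by (rule cd_u[OF c30 c56, where k=12 and n=60]) (simp_all del: unify.simps add: unify_n)

lemma c58: "cdp d (I (I (V 42) (I (V 47) (V 48))) (I (V 42) (I (I (V 24) (I (V 47) (N (V 48)))) (I (V 24) (I (V 47) (V 49))))))"
  by (rule cd_u[OF c28 c57, where k=13 and n=60]) (simp_all del: unify.simps add: unify_n)

lemma c59: "cdp d (I (I (V 50) (I (V 55) (V 56))) (I (I (V 50) (I (V 32) (I (V 55) (N (V 56))))) (I (V 50) (I (V 32) (I (V 55) (V 57))))))"
  by (rule cd_u[OF c3 c58, where k=8 and n=60]) (simp_all del: unify.simps add: unify_n)

lemma c60: "cdp d (I (I (I (V 53) (I (V 58) (V 59))) (I (V 53) (I (V 35) (I (V 58) (N (V 59)))))) (I (I (V 53) (I (V 58) (V 59))) (I (V 53) (I (V 35) (I (V 58) (V 60))))))"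
  by (rule cd_u[OF axH2 c59, where k=3 and n=60]) (simp_all del: unify.simps add: unify_n)

lemma c61: "cdp d (I (I (V 64) (I (V 66) (V 59))) (I (V 64) (I (N (V 59)) (I (V 66) (V 60)))))"
  by (rule cd_u[OF c60 c36, where k=61 and n=60]) (simp_all del: unify.simps add: unify_n)

lemma c62: "cdp d (I (I (V 80) (I (V 82) (V 75))) (I (V 80) (I (N (V 75)) (N (V 82)))))"
  by (rule cd_u[OF c51 c61, where k=16 and n=60]) (simp_all del: unify.simps add: unify_n)

lemma comb_I0: "cdp d (I (V 0) (V 0))"
proof -
  have "cdp d (subst (\<lambda>x. V ((\<lambda>x. if x = 5 then 0 else x) x)) (I (V 5) (V 5)))" by (rule cdp_inj[OF c1]) (simp add: inj_on_def)
  then show ?thesis by simp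
qed

lemma comb_SK: "cdp d (I (I (V 0) (V 1)) (I (V 0) (V 0)))"
proof -
  have "cdp d (subst (\<lambda>x. V ((\<lambda>x. if x = 3 then 0 else if x = 4 then 1 else x) x)) (I (I (V 3) (V 4)) (I (V 3) (V 3))))" by (rule cdp_inj[OF c0]) (simp add: inj_on_def)
  then show ?thesis by simp
qed

lemma comb_Cc: "cdp d (I (I (V 0) (I (V 1) (V 2))) (I (V 1) (I (V 0) (V 2))))"
proof -
  have "cdp d (subst (\<lambda>x. V ((\<lambda>x. if x = 24 then 0 else if x = 23 then 1 else if x = 20 then 2 else x) x)) (I (I (V 24) (I (V 23) (V 20))) (I (V 23) (I (V 24) (V 20)))))" by (rule cdp_inj[OF c9]) (simp add: inj_on_def)
  then show ?thesis by simp
qed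

lemma comb_Phi: "cdp d (I (I (V 0) (V 1)) (I (I (V 2) (V 3)) (I (I (V 1) (V 2)) (I (V 0) (V 3)))))"
proof -
  have "cdp d (subst (\<lambda>x. V ((\<lambda>x. if x = 57 then 0 else if x = 54 then 1 else if x = 55 then 2 else if x = 30 then 3 else x) x)) (I (I (V 57) (V 54)) (I (I (V 55) (V 30)) (I (I (V 54) (V 55)) (I (V 57) (V 30))))))" by (rule cdp_inj[OF c21]) (simp add: inj_on_def)
  then show ?thesis by simp
qed

lemma comb_Hp: "cdp d (I (I (V 0) (V 1)) (I (I (V 2) (V 0)) (I (V 2) (V 2))))"
proof -
  have "cdp d (subst (\<lambda>x. V ((\<lambda>x. if x = 21 then 0 else if x = 22 then 1 else if x = 24 then 2 else x) x)) (I (I (V 21) (V 22)) (I (I (V 24) (V 21)) (I (V 24) (V 24)))))" by (rule cdp_inj[OF c26]) (simp add: inj_on_def)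
  then show ?thesis by simp
qed

lemma comb_H: "cdp d (I (I (V 0) (I (V 1) (V 2))) (I (I (V 3) (V 0)) (I (V 1) (V 1))))"
proof -
  have "cdp d (subst (\<lambda>x. V ((\<lambda>x. if x = 70 then 0 else if x = 78 then 1 else if x = 63 then 2 else if x = 79 then 3 else x) x)) (I (I (V 70) (I (V 78) (V 63))) (I (I (V 79) (V 70)) (I (V 78) (V 78)))))" by (rule cdp_inj[OF c38]) (simp add: inj_on_def)
  then show ?thesis by simp
qed

lemma comb_LPhi: "cdp d (I (I (V 0) (I (V 1) (V 2))) (I (V 0) (I (I (V 3) (V 4)) (I (I (V 2) (V 3)) (I (V 1) (V 4))))))"
proof -
  have "cdp d (subst (\<lambda>x. V ((\<lambda>x. if x = 77 then 0 else if x = 72 then 1 else if x = 69 then 2 else if x = 70 then 3 else if x = 35 then 4 else x) x)) (I (I (V 77) (I (V 72) (V 69))) (I (V 77) (I (I (V 70) (V 35)) (I (I (V 69) (V 70)) (I (V 72) (V 35)))))))" by (rule cdp_inj[OF c45]) (simp add: inj_on_def)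
  then show ?thesis by simp
qed

lemma comb_LC: "cdp d (I (I (V 0) (I (V 1) (V 2))) (I (V 0) (I (N (V 2)) (N (V 1)))))"
proof -
  have "cdp d (subst (\<lambda>x. V ((\<lambda>x. if x = 80 then 0 else if x = 82 then 1 else if x = 75 then 2 else x) x)) (I (I (V 80) (I (V 82) (V 75))) (I (V 80) (I (N (V 75)) (N (V 82))))))" by (rule cdp_inj[OF c62]) (simp add: inj_on_def)
  then show ?thesis by simp
qed

lemma cd1:
  assumes "cdp d (I A B)" "cdp d m" "subst \<theta> A = m"
    "\<forall>x\<in>vars B - vars A. \<exists>y. \<theta> x = V y \<and> y \<notin> vars m"
    "inj_on \<theta> (vars B - vars A)" "subst \<theta> B = D" "d \<longrightarrow> \<not> has_dn D"
  shows "cdp d D"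
  using cd_case1g[of d A B \<theta>] assms by simp

fun dch :: "nat \<Rightarrow> nat list \<Rightarrow> form" where
  "dch z [] = V z"
| "dch z (x # xs) = I (V x) (dch z xs)"

lemma vars_dch[simp]: "vars (dch z xs) = insert z (set xs)" by (induct xs) auto
lemma dn_dch[simp]: "\<not> has_dn (dch z xs)" by (induct xs) auto

lemma idv: "cdp d (I (V x) (V x))"
proof -
  have "cdp d (subst (\<lambda>v. V ((\<lambda>_. x) v)) (I (V 0) (V 0)))" by (rule cdp_inj[OF comb_I0]) simp
  then show ?thesis by simp
qed

lemma dd: "distinct xs \<Longrightarrow> z \<notin> set xs \<Longrightarrow> cdp d (I (dch z xs) (dch z xs))"
proof (induct xs)
  case Nil then show ?case using idv by simp
next
  case (Cons x ys)
  let ?D = "dch z ys"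
  have s1: "cdp d (I (I (V (x+1)) (V (x+2))) (I (I (V x) (V (x+1))) (I (V x) (V (x+2)))))"
    by (rule cd1[OF comb_Phi idv[of d x], where \<theta>="V(0 := V x, 1 := V x, 2 := V (x+1), 3 := V (x+2))"])
       (auto simp: inj_on_def)
  have "cdp d (I (I (V x) ?D) (I (V x) ?D))"
    by (rule cd1[OF s1 Cons(1), where \<theta>="V(x+1 := ?D, x+2 := ?D)"]) (use Cons(2,3) in \<open>auto simp: inj_on_def\<close>)
  then show ?case by simp
qed

lemma link: "distinct xs \<Longrightarrow> z \<notin> set xs \<Longrightarrow> x \<in> set xs \<Longrightarrow> cdp d (I (dch z xs) (I (V x) (V x)))"
proof (induct xs)
  case Nil then show ?case by simp
next
  case (Cons y ys)
  let ?D = "dch z ys"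
  show ?case
  proof (cases "x = y")
    case True
    have "cdp d (I (I (V y) ?D) (I (V y) (V y)))"
      by (rule cd1[OF comb_Hp dd[of ys z d], where \<theta>="V(0 := ?D, 1 := ?D, 2 := V y)"])
         (use Cons(2,3) in \<open>auto simp: inj_on_def\<close>)
    then show ?thesis using True by simp
  next
    case False
    have ih: "cdp d (I ?D (I (V x) (V x)))" using Cons False by auto
    have "cdp d (I (I (V y) ?D) (I (V x) (V x)))"
      by (rule cd1[OF comb_H ih, where \<theta>="V(0 := ?D, 1 := V x, 2 := V x, 3 := V y)"])
         (use Cons(2,3,4) False in \<open>auto simp: inj_on_def\<close>)
    then show ?thesis by simp
  qed
qed

lemma main_ctx:
  assumes "vars a \<subseteq> set xs" "distinct xs" "z \<notin> set xs" "d \<longrightarrow> \<not> has_dn a"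
  shows "cdp d (I (dch z xs) (I a a))"
  using assms
proof (induct a)
  case (V x) then show ?case using link by auto
next
  case (I a1 a2)
  let ?D = "dch z xs"
  define r where "r = Suc (Max (insert z (set xs)))"
  define s where "s = Suc r"
  have rD: "r \<notin> vars ?D" "s \<notin> vars ?D"
    unfolding r_def s_def vars_dch by (meson List.finite_set Max_ge Suc_n_not_le_n finite_insert le_Suc_eq)+
  have a1: "vars a1 \<subseteq> set xs" "vars a2 \<subseteq> set xs" using I(3) by auto
  have r1: "r \<notin> vars a1" "s \<notin> vars a1" using rD a1 by auto
  have rs: "r \<noteq> s" by (simp add: s_def)
  have ih1: "cdp d (I ?D (I a1 a1))" using I by auto
  have ih2: "cdp d (I ?D (I a2 a2))" using I by auto
  have dn: "d \<longrightarrow> \<not> has_dn a1 \<and> \<not> has_dn a2" using I(6) by auto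
  have s1: "cdp d (I ?D (I (I (V r) (V s)) (I (I a1 (V r)) (I a1 (V s)))))"
    by (rule cd1[OF comb_LPhi ih1, where \<theta>="V(0 := ?D, 1 := a1, 2 := a1, 3 := V r, 4 := V s)"])
       (use rD r1 rs dn in \<open>auto simp: inj_on_def vars_subst\<close>)
  have s2: "cdp d (I (I ?D (I (V r) (V s))) (I ?D (I (I a1 (V r)) (I a1 (V s)))))"
    by (rule cd1[OF axH2 s1, where \<theta>="V(0 := ?D, 1 := I (V r) (V s), 2 := I (I a1 (V r)) (I a1 (V s)))"])
       (use dn in \<open>auto simp: inj_on_def\<close>)
  have sD: "subst (V(r := a2, s := a2)) ?D = ?D"
    by (rule subst_id_on) (use rD in auto)
  have sa: "subst (V(r := a2, s := a2)) a1 = a1"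
    by (rule subst_id_on) (use r1 in auto)
  have "cdp d (I ?D (I (I a1 a2) (I a1 a2)))"
    by (rule cd1[OF s2 ih2, where \<theta>="V(r := a2, s := a2)"])
       (use sD sa a1 dn in \<open>auto simp: inj_on_def\<close>)
  then show ?case .
next
  case (N a1)
  let ?D = "dch z xs"
  have ih: "cdp d (I ?D (I a1 a1))" using N by auto
  have "d \<longrightarrow> \<not> has_dn (N a1)" using N(5) by simp
  then show ?case
    by (intro cd1[OF comb_LC ih, where \<theta>="V(0 := ?D, 1 := a1, 2 := a1)"]) (auto simp: inj_on_def)
qed

lemma selfimp: assumes "d \<longrightarrow> \<not> has_dn f" shows "cdp d (I f f)"
proof -
  define xs where "xs = sorted_list_of_set (vars f)"
  define z where "z = Suc (Max (vars f))"
  have xs: "set xs = vars f" "distinct xs" by (auto simp: xs_def)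
  have z: "z \<notin> set xs" unfolding xs z_def
    by (meson Max_ge Suc_n_not_le_n finite_vars)
  let ?D = "dch z xs"
  have m: "cdp d (I ?D (I f f))" by (rule main_ctx) (use xs z assms in auto)
  have s1: "cdp d (I f (I ?D f))"
    by (rule cd1[OF comb_Cc m, where \<theta>="V(0 := ?D, 1 := f, 2 := f)"]) (use assms in \<open>auto simp: inj_on_def\<close>)
  show ?thesis
    by (rule cd1[OF comb_SK s1, where \<theta>="V(0 := f, 1 := I ?D f)"]) (use assms in \<open>auto simp: inj_on_def\<close>)
qed

lemma cdp_subst: "cdp d t \<Longrightarrow> (d \<longrightarrow> \<not> has_dn (subst s t)) \<Longrightarrow> cdp d (subst s t)"
  using cd_case2[OF selfimp] by blast

lemma cdp_mp: assumes "cdp d (I p q)" "cdp d p" "d \<longrightarrow> \<not> has_dn q" shows "cdp d q"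
  by (rule cd1[OF assms(1,2), where \<theta>=V]) (use assms(3) in \<open>auto simp: inj_on_def\<close>)

lemma step_mp:
  assumes "mp_sub_provable Ax M" "mp_sub_provable Ax m" "cd_step M m D"
  shows "mp_sub_provable Ax D"
proof -
  obtain \<rho>1 \<rho>2 A B \<sigma> where h: "subst (V \<circ> \<rho>1) M = I A B" "is_mgu \<sigma> A (subst (V \<circ> \<rho>2) m)"
    "variant (subst \<sigma> B) D"
    using assms(3) unfolding cd_step_def by blast
  have "mp_sub_provable Ax (subst \<sigma> (subst (V \<circ> \<rho>1) M))"
    by (intro mp_sub_provable.sub assms(1))
  then have 1: "mp_sub_provable Ax (I (subst \<sigma> A) (subst \<sigma> B))" using h(1) by simp
  have "mp_sub_provable Ax (subst \<sigma> (subst (V \<circ> \<rho>2) m))"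
    by (intro mp_sub_provable.sub assms(2))
  then have 2: "mp_sub_provable Ax (subst \<sigma> A)" using h(2) unfolding is_mgu_def by simp
  have 3: "mp_sub_provable Ax (subst \<sigma> B)" by (rule mp_sub_provable.mp[OF 1 2])
  obtain \<rho> where "D = subst (V \<circ> \<rho>) (subst \<sigma> B)" using h(3) unfolding variant_def by blast
  then show ?thesis using mp_sub_provable.sub[OF 3] by simp
qed

lemma cd_proof_mp:
  assumes "cd_proof Ax ls"
  shows "k < length ls \<Longrightarrow> mp_sub_provable Ax (ls ! k)"
proof (induct k rule: less_induct)
  case (less k)
  have "(\<exists>a\<in>Ax. variant a (ls ! k)) \<or>
      (\<exists>M m. M \<in> set (take k ls) \<and> m \<in> set (take k ls) \<and> cd_step M m (ls ! k))"
    using assms less(2) unfolding cd_proof_def by blast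
  then show ?case
  proof
    assume "\<exists>a\<in>Ax. variant a (ls ! k)"
    then obtain a \<rho> where "a \<in> Ax" "ls ! k = subst (V \<circ> \<rho>) a" unfolding variant_def by blast
    then show ?thesis by (metis mp_sub_provable.ax mp_sub_provable.sub)
  next
    assume "\<exists>M m. M \<in> set (take k ls) \<and> m \<in> set (take k ls) \<and> cd_step M m (ls ! k)"
    then obtain M m where Mm: "M \<in> set (take k ls)" "m \<in> set (take k ls)" "cd_step M m (ls ! k)" by blast
    have pr: "mp_sub_provable Ax x" if xin: "x \<in> set (take k ls)" for x
    proof -
      obtain j where "j < length (take k ls)" "take k ls ! j = x" using xin by (meson in_set_conv_nth)
      then have "j < k" "ls ! j = x" using less(2) by auto
      then show ?thesis using less(1) less(2) by auto
    qed
    show ?thesis by (rule step_mp[OF pr[OF Mm(1)] pr[OF Mm(2)] Mm(3)])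
  qed
qed

lemma mp_cdp: "mp_sub_provable Hax b \<Longrightarrow> cdp False b"
proof (induct rule: mp_sub_provable.induct)
  case (ax a) then show ?case by (rule cdp_ax)
next
  case (sub p s) then show ?case using cdp_subst by blast
next
  case (mp p q) then show ?case using cdp_mp by blast
qed

theorem theorem7:
  shows "(\<forall>b. cd_provable Hax b \<longleftrightarrow> mp_sub_provable Hax b) \<and>
         (\<forall>b ls. mp_inst_proof Hax ls \<and> ls \<noteq> [] \<and> last ls = b \<and>
            (\<forall>l \<in> set ls. \<not> has_dn l) \<longrightarrow>
            (\<exists>ps. dn_free_cd_proof Hax ps \<and> ps \<noteq> [] \<and> last ps = b))"
proof (intro conjI allI impI)
  fix b
  show "cd_provable Hax b \<longleftrightarrow> mp_sub_provable Hax b"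
  proof
    assume "cd_provable Hax b"
    then obtain ls where "cd_proof Hax ls" "ls \<noteq> []" "last ls = b" unfolding cd_provable_def by blast
    then show "mp_sub_provable Hax b"
      using cd_proof_mp[of Hax ls "length ls - 1"] by (simp add: last_conv_nth)
  next
    assume "mp_sub_provable Hax b"
    then have "cdp False b" by (rule mp_cdp)
    then show "cd_provable Hax b" unfolding cdp_def okp_def cd_provable_def by blast
  qed
next
  fix b ls
  assume as: "mp_inst_proof Hax ls \<and> ls \<noteq> [] \<and> last ls = b \<and> (\<forall>l \<in> set ls. \<not> has_dn l)"
  have all: "k < length ls \<Longrightarrow> cdp True (ls ! k)" for k
  proof (induct k rule: less_induct)
    case (less k)
    have ndn: "\<not> has_dn (ls ! k)" using as less(2) by auto
    have "(\<exists>a\<in>Hax. \<exists>s. ls ! k = subst s a) \<or>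
      (\<exists>p. I p (ls ! k) \<in> set (take k ls) \<and> p \<in> set (take k ls))"
      using as less(2) unfolding mp_inst_proof_def by blast
    then show ?case
    proof
      assume "\<exists>a\<in>Hax. \<exists>s. ls ! k = subst s a"
      then obtain a s where "a \<in> Hax" "ls ! k = subst s a" by blast
      then show ?thesis using cdp_subst[OF cdp_ax[of a True], of s] ndn by simp
    next
      assume "\<exists>p. I p (ls ! k) \<in> set (take k ls) \<and> p \<in> set (take k ls)"
      then obtain p where p: "I p (ls ! k) \<in> set (take k ls)" "p \<in> set (take k ls)" by blast
      have pr: "cdp True x" if xin: "x \<in> set (take k ls)" for x
      proof -
        obtain j where "j < length (take k ls)" "take k ls ! j = x" using xin by (meson in_set_conv_nth)
        then have "j < k" "ls ! j = x" using less(2) by auto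
        then show ?thesis using less(1) less(2) by auto
      qed
      show ?thesis by (rule cdp_mp[OF pr[OF p(1)] pr[OF p(2)]]) (use ndn in simp)
    qed
  qed
  have "last ls = ls ! (length ls - 1)" using as last_conv_nth by blast
  then have "cdp True b" using all[of "length ls - 1"] as by simp
  then show "\<exists>ps. dn_free_cd_proof Hax ps \<and> ps \<noteq> [] \<and> last ps = b"
    unfolding cdp_def okp_def dn_free_cd_proof_def by auto
qed

end
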